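(* Let $\Lambda$ be a Gaussian lattice of hyperbolic signature $(1,n)$, $n\ge 2$, with $h$ taking values in $(1+i)\mathcal G$, let $\chi$ be an antiunitary involution, and let $r$ be a root with $\mathbb B^\chi\cap H_r\neq\emptyset$. Then there is a sublattice $N\subset\Lambda^\chi$ isomorphic to one of $A_1$, $A_1(2)$, $A_1\oplus A_1(2)$, $A_1(2)^2$ such that $\mathbb B^\chi\cap H_r=\{[x]\in\mathbb B^\chi: h(x,y)=0\text{ for all }y\in N\}$.
   Context: Let $\mathcal G=\mathbb Z[i]$. A Gaussian lattice is a free $\mathcal G$-module $\Lambda$ of finite rank with a nondegenerate Hermitian form $h$ (antilinear in first, linear in second argument). A root is $r\in\Lambda$ with $h(r,r)=-2$; $\mathbb B=\mathbb P\{z\in\Lambda\otimes_{\mathcal G}\mathbb C:h(z,z)>0\}$, $H_r=\{z\in\mathbb B:h(r,z)=0\}$. An antiunitary involution is an additive bijection $\chi$ with $\chi^2=1$, $\chi(\lambda x)=\bar\lambda\chi(x)$, $h(\chi x,\chi y)=\overline{h(x,y)}$; $\Lambda^\chi=\{x:\chi x=x\}$ with the real form $h$, and $\mathbb B^\chi=\mathbb P\{x\in\Lambda^\chi\otimes\mathbb R:h(x,x)>0\}$. $\mathbb Z$-lattices: $A_1=(-2)$ (rank one, form $-2xy$), $L(n)$ is $L$ with form scaled by $n$, $\oplus$ orthogonal sum. *)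

theory Defs
  imports "HOL-Analysis.Analysis"
begin

definition gauss :: "complex set" where
  "gauss = {z. Re z \<in> \<int> \<and> Im z \<in> \<int>}"

text \<open>The Gaussian lattice of rank CARD('m), realised as the standard
  lattice gauss^m inside complex^m, with Hermitian form given by a Gram
  matrix H (antilinear in the first argument, linear in the second).\<close>
definition glat :: "(complex ^ 'm) set" where
  "glat = {x. \<forall>i. x $ i \<in> gauss}"

definition hform :: "complex ^ 'm ^ 'm \<Rightarrow> complex ^ 'm \<Rightarrow> complex ^ 'm \<Rightarrow> complex" where
  "hform H x y = (\<Sum>i\<in>UNIV. \<Sum>j\<in>UNIV. cnj (x $ i) * H $ i $ j * y $ j)"

definition hermitian_mat :: "complex ^ 'm ^ 'm \<Rightarrow> bool" where
  "hermitian_mat H \<longleftrightarrow> (\<forall>i j. H $ i $ j = cnj (H $ j $ i))"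

definition conj_transpose :: "complex ^ 'm ^ 'm \<Rightarrow> complex ^ 'm ^ 'm" where
  "conj_transpose P = (\<chi> i j. cnj (P $ j $ i))"

definition hyperbolic_sig :: "nat \<Rightarrow> complex ^ 'm ^ 'm \<Rightarrow> bool" where
  "hyperbolic_sig n H \<longleftrightarrow> hermitian_mat H \<and> CARD('m) = n + 1 \<and>
     (\<exists>P i0. invertible P \<and>
        (\<forall>i j. (conj_transpose P ** H ** P) $ i $ j =
                 (if i = j then (if i = i0 then 1 else -1) else 0)))"

definition antiunitary_inv :: "complex ^ 'm ^ 'm \<Rightarrow> (complex ^ 'm \<Rightarrow> complex ^ 'm) \<Rightarrow> bool" where
  "antiunitary_inv H \<chi>' \<longleftrightarrow>
     (\<forall>x\<in>glat. \<chi>' x \<in> glat) \<and>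
     (\<forall>x\<in>glat. \<chi>' (\<chi>' x) = x) \<and>
     (\<forall>x\<in>glat. \<forall>y\<in>glat. \<chi>' (x + y) = \<chi>' x + \<chi>' y) \<and>
     (\<forall>c\<in>gauss. \<forall>x\<in>glat. \<chi>' (c *s x) = cnj c *s \<chi>' x) \<and>
     (\<forall>x\<in>glat. \<forall>y\<in>glat. hform H (\<chi>' x) (\<chi>' y) = cnj (hform H x y))"

definition fixlat :: "(complex ^ 'm \<Rightarrow> complex ^ 'm) \<Rightarrow> (complex ^ 'm) set" where
  "fixlat \<chi>' = {x \<in> glat. \<chi>' x = x}"

text \<open>Points of complex projective space: the class [z] of a nonzero vector.\<close>
definition pclass :: "complex ^ 'm \<Rightarrow> (complex ^ 'm) set" where
  "pclass z = {c *s z | c. c \<noteq> 0}"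

text \<open>The complex ball B (h(z,z) is real as H is Hermitian).\<close>
definition cball_B :: "complex ^ 'm ^ 'm \<Rightarrow> (complex ^ 'm) set set" where
  "cball_B H = {pclass z | z. Re (hform H z z) > 0}"

text \<open>The real ball B^chi: classes of vectors in Lambda^chi \<otimes> R, realised as
  the real span of Lambda^chi inside complex^m.\<close>
definition rball_B :: "complex ^ 'm ^ 'm \<Rightarrow> (complex ^ 'm \<Rightarrow> complex ^ 'm) \<Rightarrow> (complex ^ 'm) set set" where
  "rball_B H \<chi>' = {pclass x | x. x \<in> span (fixlat \<chi>') \<and> Re (hform H x x) > 0}"

definition mirror_H :: "complex ^ 'm ^ 'm \<Rightarrow> complex ^ 'm \<Rightarrow> (complex ^ 'm) set set" where
  "mirror_H H r = {pclass z | z. Re (hform H z z) > 0 \<and> hform H r z = 0}"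

text \<open>N is a Z-lattice (w.r.t. the form hform H) isomorphic to the lattice with
  k x k integer Gram matrix G: there is a Z-linear bijection Z^k \<rightarrow> N
  (Z^k as finitely supported coefficient functions) preserving the forms.\<close>
definition zlat_iso :: "complex ^ 'm ^ 'm \<Rightarrow> (complex ^ 'm) set \<Rightarrow> nat \<Rightarrow> (nat \<Rightarrow> nat \<Rightarrow> int) \<Rightarrow> bool" where
  "zlat_iso H N k G \<longleftrightarrow> (\<exists>v :: nat \<Rightarrow> complex ^ 'm.
     N = {(\<Sum>i<k. of_int (a i) *s v i) | a :: nat \<Rightarrow> int. True} \<and>
     inj_on (\<lambda>a :: nat \<Rightarrow> int. \<Sum>i<k. of_int (a i) *s v i) {a. \<forall>i\<ge>k. a i = 0} \<and>
     (\<forall>i<k. \<forall>j<k. hform H (v i) (v j) = of_int (G i j)))"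

definition gram_A1 :: "nat \<Rightarrow> nat \<Rightarrow> int" where "gram_A1 i j = -2"
definition gram_A1_2 :: "nat \<Rightarrow> nat \<Rightarrow> int" where "gram_A1_2 i j = -4"
definition gram_A1_A1_2 :: "nat \<Rightarrow> nat \<Rightarrow> int" where
  "gram_A1_A1_2 i j = (if i = j then (if i = 0 then -2 else -4) else 0)"
definition gram_A1_2_sq :: "nat \<Rightarrow> nat \<Rightarrow> int" where
  "gram_A1_2_sq i j = (if i = j then -4 else 0)"

end

theory Submission
  imports Defs
begin


lemma hform_add_right: "hform H x (y + z) = hform H x y + hform H x z"
  unfolding hform_def by (simp add: distrib_left sum.distrib)
lemma hform_add_left: "hform H (x + y) z = hform H x z + hform H y z"
  unfolding hform_def by (simp add: distrib_right sum.distrib)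
lemma hform_scale_right: "hform H x (c *s y) = c * hform H x y"
  unfolding hform_def by (simp add: sum_distrib_left algebra_simps)
lemma hform_scale_left: "hform H (c *s x) y = cnj c * hform H x y"
  unfolding hform_def by (simp add: sum_distrib_left algebra_simps)
lemma hform_scaleR_left: "hform H (c *\<^sub>R x) y = of_real c * hform H x y"
  unfolding hform_def vector_scaleR_component by (simp add: sum_distrib_left algebra_simps scaleR_conv_of_real)
lemma hform_neg_right: "hform H x (- y) = - hform H x y"
  unfolding hform_def by (simp add: sum_negf)
lemma hform_neg_left: "hform H (- x) y = - hform H x y"
  unfolding hform_def by (simp add: sum_negf)
lemma hform_diff_right: "hform H x (y - z) = hform H x y - hform H x z"
  using hform_add_right[of H x y "-z"] hform_neg_right[of H x z] by simp
lemma hform_diff_left: "hform H (x - y) z = hform H x z - hform H y z"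
  using hform_add_left[of H x "-y" z] hform_neg_left[of H y z] by simp
lemma hform_zero_left: "hform H 0 y = 0" unfolding hform_def by simp
lemma hform_zero_right: "hform H x 0 = 0" unfolding hform_def by simp

lemma hform_herm: assumes "hermitian_mat H" shows "hform H x y = cnj (hform H y x)"
proof -
  have "cnj (hform H y x) = (\<Sum>i\<in>UNIV. \<Sum>j\<in>UNIV. y $ i * cnj (H $ i $ j) * cnj (x $ j))"
    unfolding hform_def by (simp add: cnj_sum)
  also have "\<dots> = (\<Sum>i\<in>UNIV. \<Sum>j\<in>UNIV. cnj (x $ j) * H $ j $ i * y $ i)"
    using assms unfolding hermitian_mat_def
    by (intro sum.cong refl) (metis complex_cnj_cnj mult.commute mult.left_commute)
  also have "\<dots> = hform H x y" unfolding hform_def by (rule sum.swap)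
  finally show ?thesis by simp
qed

lemma hform_mv: "hform H x y = (\<Sum>i\<in>UNIV. cnj (x $ i) * (H *v y) $ i)"
  unfolding hform_def matrix_vector_mult_def by (simp add: sum_distrib_left mult.assoc)

lemma ct_mv: "(\<Sum>i\<in>UNIV. cnj (X $ i) * (conj_transpose P *v Z) $ i) =
   (\<Sum>j\<in>UNIV. cnj ((P *v X) $ j) * Z $ j)"
proof -
  have "(\<Sum>i\<in>UNIV. cnj (X $ i) * (conj_transpose P *v Z) $ i) =
     (\<Sum>i\<in>UNIV. \<Sum>j\<in>UNIV. cnj (X $ i) * cnj (P $ j $ i) * Z $ j)"
    unfolding conj_transpose_def matrix_vector_mult_def by (simp add: sum_distrib_left mult.assoc)
  also have "\<dots> = (\<Sum>j\<in>UNIV. \<Sum>i\<in>UNIV. cnj (X $ i) * cnj (P $ j $ i) * Z $ j)"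
    by (rule sum.swap)
  also have "\<dots> = (\<Sum>j\<in>UNIV. cnj ((P *v X) $ j) * Z $ j)"
    unfolding matrix_vector_mult_def by (simp add: cnj_sum sum_distrib_right sum_distrib_left mult.commute mult.left_commute)
  finally show ?thesis .
qed

lemma hform_transfer: "hform (conj_transpose P ** H ** P) X Y = hform H (P *v X) (P *v Y)"
  unfolding hform_mv by (simp add: matrix_vector_mul_assoc[symmetric] ct_mv)

lemma hform_diag:
  assumes "\<forall>i j. D $ i $ j = (if i = j then (if i = i0 then 1 else -1) else 0)"
  shows "hform D X Y = cnj (X $ i0) * Y $ i0 - (\<Sum>i\<in>UNIV - {i0}. cnj (X $ i) * Y $ i)"
proof -
  have "hform D X Y = (\<Sum>i\<in>UNIV. cnj (X $ i) * (if i = i0 then 1 else -1) * Y $ i)"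
  proof -
    have "\<And>i. (\<Sum>j\<in>UNIV. cnj (X $ i) * D $ i $ j * Y $ j) =
       (\<Sum>j\<in>UNIV. if j = i then cnj (X $ i) * (if i = i0 then 1 else -1) * Y $ i else 0)"
      by (intro sum.cong) (auto simp: assms)
    then show ?thesis unfolding hform_def by simp
  qed
  also have "\<dots> = cnj (X $ i0) * Y $ i0 + (\<Sum>i\<in>UNIV - {i0}. cnj (X $ i) * (if i = i0 then 1 else -1) * Y $ i)"
    by (subst sum.remove[of UNIV i0]) auto
  also have "\<dots> = cnj (X $ i0) * Y $ i0 - (\<Sum>i\<in>UNIV - {i0}. cnj (X $ i) * Y $ i)"
    by (simp add: sum_negf[symmetric])
  finally show ?thesis .
qed

lemma cnj_mult_self: "cnj z * z = of_real (cmod z ^ 2)"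
  using complex_norm_square[of z] by (simp add: mult.commute)

lemma coord_neg:
  fixes X W :: "complex ^ 'm" and i0 :: 'm
  defines "I \<equiv> UNIV - {i0}"
  assumes x: "Re (cnj (X$i0) * X$i0 - (\<Sum>i\<in>I. cnj (X$i) * X$i)) > 0"
    and xw: "cnj (X$i0) * W$i0 - (\<Sum>i\<in>I. cnj (X$i) * W$i) = 0"
  shows "Re (cnj (W$i0) * W$i0 - (\<Sum>i\<in>I. cnj (W$i) * W$i)) \<le> 0 \<and>
         (cnj (W$i0) * W$i0 - (\<Sum>i\<in>I. cnj (W$i) * W$i) = 0 \<longrightarrow> W = 0)"
proof -
  define A where "A = cmod (X$i0) ^ 2"
  define B where "B = cmod (W$i0) ^ 2"
  define Sx where "Sx = (\<Sum>i\<in>I. cmod (X$i) ^ 2)"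
  define Sw where "Sw = (\<Sum>i\<in>I. cmod (W$i) ^ 2)"
  have eX: "cnj (X$i0) * X$i0 - (\<Sum>i\<in>I. cnj (X$i) * X$i) = of_real (A - Sx)"
    by (simp add: cnj_mult_self A_def Sx_def)
  have eW: "cnj (W$i0) * W$i0 - (\<Sum>i\<in>I. cnj (W$i) * W$i) = of_real (B - Sw)"
    by (simp add: cnj_mult_self B_def Sw_def)
  have ASx: "Sx < A" using x eX by simp
  have Sx0: "0 \<le> Sx" unfolding Sx_def by (simp add: sum_nonneg)
  have Sw0: "0 \<le> Sw" unfolding Sw_def by (simp add: sum_nonneg)
  have B0: "0 \<le> B" unfolding B_def by simp
  have "cmod (cnj (X$i0) * W$i0) = cmod (\<Sum>i\<in>I. cnj (X$i) * W$i)" using xw by simp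
  also have "\<dots> \<le> (\<Sum>i\<in>I. cmod (X$i) * cmod (W$i))"
    by (rule order_trans[OF norm_sum]) (simp add: norm_mult)
  finally have le1: "cmod (X$i0) * cmod (W$i0) \<le> (\<Sum>i\<in>I. cmod (X$i) * cmod (W$i))"
    by (simp add: norm_mult)
  have "(cmod (X$i0) * cmod (W$i0))^2 \<le> (\<Sum>i\<in>I. cmod (X$i) * cmod (W$i))^2"
    using le1 by (intro power_mono) auto
  also have "\<dots> \<le> Sx * Sw" unfolding Sx_def Sw_def by (rule Cauchy_Schwarz_ineq_sum)
  finally have AB: "A * B \<le> Sx * Sw" by (simp add: A_def B_def power_mult_distrib)
  show ?thesis
  proof (cases "Sw = 0")
    case True
    then have Wi: "\<forall>i\<in>I. W$i = 0" unfolding Sw_def I_def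
      by (subst (asm) sum_nonneg_eq_0_iff) auto
    have "A * B \<le> 0" using AB True by simp
    moreover have "A > 0" using ASx Sx0 by simp
    ultimately have "B \<le> 0" by (simp add: mult_le_0_iff)
    then have "W$i0 = 0" unfolding B_def by simp
    with Wi have "W = 0" unfolding I_def by (auto simp: vec_eq_iff)
    then show ?thesis by simp
  next
    case False
    then have "Sw > 0" using Sw0 by simp
    then have "Sx * Sw < A * Sw" using ASx by simp
    then have "A * B < A * Sw" using AB by simp
    then have "B < Sw" using ASx Sx0 by (smt (verit) mult_le_cancel_left)
    then show ?thesis using eW by auto
  qed
qed

lemma sig_neg:
  assumes hs: "hyperbolic_sig n H" and x: "Re (hform H x x) > 0" and xw: "hform H x w = 0"
  shows "Re (hform H w w) \<le> 0 \<and> (hform H w w = 0 \<longrightarrow> w = 0)"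
proof -
  obtain P i0 where P: "invertible P" and D: "\<forall>i j. (conj_transpose P ** H ** P) $ i $ j =
                 (if i = j then (if i = i0 then 1 else -1) else 0)"
    using hs unfolding hyperbolic_sig_def by blast
  obtain Q where Q: "P ** Q = mat 1" using P unfolding invertible_def by blast
  have bk: "P *v (Q *v v) = v" for v
    by (simp add: matrix_vector_mul_assoc Q)
  define X where "X = Q *v x"
  define W where "W = Q *v w"
  have tr: "hform H u v = hform (conj_transpose P ** H ** P) (Q *v u) (Q *v v)" for u v
    by (simp add: hform_transfer bk)
  note dg = hform_diag[OF D]
  have r: "Re (cnj (W$i0) * W$i0 - (\<Sum>i\<in>UNIV - {i0}. cnj (W$i) * W$i)) \<le> 0 \<and>
         (cnj (W$i0) * W$i0 - (\<Sum>i\<in>UNIV - {i0}. cnj (W$i) * W$i) = 0 \<longrightarrow> W = 0)"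
    apply (rule coord_neg)
    using x xw unfolding tr[of x x] tr[of x w] dg X_def W_def by auto
  have "w = P *v W" unfolding W_def by (simp add: bk)
  then show ?thesis using r unfolding tr[of w w] dg W_def by auto
qed



lemma gauss_of_int[simp]: "of_int k \<in> gauss" unfolding gauss_def by simp
lemma gauss_ii[simp]: "\<i> \<in> gauss" unfolding gauss_def by simp
lemma gauss_1[simp]: "1 \<in> gauss" unfolding gauss_def by simp
lemma gauss_m1[simp]: "-1 \<in> gauss" unfolding gauss_def by simp
lemma gauss_mult: "a \<in> gauss \<Longrightarrow> b \<in> gauss \<Longrightarrow> a * b \<in> gauss"
  unfolding gauss_def by auto
lemma gauss_add: "a \<in> gauss \<Longrightarrow> b \<in> gauss \<Longrightarrow> a + b \<in> gauss"
  unfolding gauss_def by auto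
lemma glat_add: "x \<in> glat \<Longrightarrow> y \<in> glat \<Longrightarrow> x + y \<in> glat"
  unfolding glat_def by (simp add: gauss_add)
lemma glat_scale: "c \<in> gauss \<Longrightarrow> x \<in> glat \<Longrightarrow> c *s x \<in> glat"
  unfolding glat_def by (simp add: gauss_mult)
lemma glat_0[simp]: "0 \<in> glat" unfolding glat_def gauss_def by simp
lemma glat_neg: "x \<in> glat \<Longrightarrow> - x \<in> glat"
  using glat_scale[of "-1" x] by simp
lemma glat_diff: "x \<in> glat \<Longrightarrow> y \<in> glat \<Longrightarrow> x - y \<in> glat"
  using glat_add[OF _ glat_neg, of x y] by (metis diff_conv_add_uminus)

context
  fixes H and \<chi>' :: "complex ^ 'm \<Rightarrow> complex ^ 'm"
  assumes au: "antiunitary_inv H \<chi>'"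
begin

lemma chi_glat: "x \<in> glat \<Longrightarrow> \<chi>' x \<in> glat" using au unfolding antiunitary_inv_def by blast
lemma chi_inv: "x \<in> glat \<Longrightarrow> \<chi>' (\<chi>' x) = x" using au unfolding antiunitary_inv_def by blast
lemma chi_add: "x \<in> glat \<Longrightarrow> y \<in> glat \<Longrightarrow> \<chi>' (x + y) = \<chi>' x + \<chi>' y"
  using au unfolding antiunitary_inv_def by blast
lemma chi_scale: "c \<in> gauss \<Longrightarrow> x \<in> glat \<Longrightarrow> \<chi>' (c *s x) = cnj c *s \<chi>' x"
  using au unfolding antiunitary_inv_def by blast
lemma chi_h: "x \<in> glat \<Longrightarrow> y \<in> glat \<Longrightarrow> hform H (\<chi>' x) (\<chi>' y) = cnj (hform H x y)"
  using au unfolding antiunitary_inv_def by blast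
lemma chi_neg: "x \<in> glat \<Longrightarrow> \<chi>' (- x) = - \<chi>' x"
  using chi_scale[of "-1" x] by simp
lemma chi_diff: "x \<in> glat \<Longrightarrow> y \<in> glat \<Longrightarrow> \<chi>' (x - y) = \<chi>' x - \<chi>' y"
  using chi_add[OF _ glat_neg, of x y] chi_neg[of y] by (metis diff_conv_add_uminus)
lemma chi_ii: "x \<in> glat \<Longrightarrow> \<chi>' (\<i> *s x) = - \<i> *s \<chi>' x"
  using chi_scale[of "\<i>" x] by simp

lemma span_chi:
  assumes x: "x \<in> span (fixlat \<chi>')" and v: "v \<in> glat"
  shows "hform H x (\<chi>' v) = cnj (hform H x v)"
proof -
  have sub: "subspace {x. hform H x (\<chi>' v) = cnj (hform H x v)}"
    unfolding subspace_def by (simp add: hform_zero_left hform_add_left hform_scaleR_left)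
  have "\<And>f. f \<in> fixlat \<chi>' \<Longrightarrow> hform H f (\<chi>' v) = cnj (hform H f v)"
  proof -
    fix f assume "f \<in> fixlat \<chi>'"
    then have "f \<in> glat" "\<chi>' f = f" unfolding fixlat_def by auto
    then show "hform H f (\<chi>' v) = cnj (hform H f v)" using chi_h[of f v] v by simp
  qed
  then show ?thesis using span_induct[OF x sub] by blast
qed

end



lemma hform_sum_right: "finite A \<Longrightarrow> hform H x (\<Sum>i\<in>A. f i) = (\<Sum>i\<in>A. hform H x (f i))"
  by (induct A rule: finite_induct) (simp_all add: hform_zero_right hform_add_right)
lemma hform_sum_left: "finite A \<Longrightarrow> hform H (\<Sum>i\<in>A. f i) y = (\<Sum>i\<in>A. hform H (f i) y)"
  by (induct A rule: finite_induct) (simp_all add: hform_zero_left hform_add_left)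

definition mkN :: "nat \<Rightarrow> (nat \<Rightarrow> complex ^ 'm) \<Rightarrow> (complex ^ 'm) set" where
  "mkN k v = {(\<Sum>i<k. of_int (a i) *s v i) | a :: nat \<Rightarrow> int. True}"

lemma delta_sum: "(i::nat) < k \<Longrightarrow> (\<Sum>j<k. of_int (if j = i then 1 else 0) *s v j) = (v i :: complex ^ 'm)"
proof -
  assume i: "i < k"
  have "(\<Sum>j<k. of_int (if j = i then 1 else 0) *s v j) = (\<Sum>j<k. if j = i then v j else 0)"
    by (intro sum.cong) auto
  also have "\<dots> = v i" using i by (subst sum.delta) auto
  finally show ?thesis .
qed

lemma orthN: fixes v :: "nat \<Rightarrow> complex ^ 'm" shows "(\<forall>y\<in>mkN k v. hform H x y = 0) \<longleftrightarrow> (\<forall>i<k. hform H x (v i) = 0)"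
proof
  assume h: "\<forall>y\<in>mkN k v. hform H x y = 0"
  show "\<forall>i<k. hform H x (v i) = 0"
  proof (intro allI impI)
    fix i assume i: "i < k"
    have "(\<Sum>j<k. of_int (if j = i then 1 else 0) *s v j) \<in> mkN k v"
      unfolding mkN_def mem_Collect_eq by (rule exI[where x="\<lambda>j. if j = i then 1 else 0"]) simp
    then show "hform H x (v i) = 0" using h delta_sum[OF i, of v] by metis
  qed
next
  assume h: "\<forall>i<k. hform H x (v i) = 0"
  show "\<forall>y\<in>mkN k v. hform H x y = 0"
    unfolding mkN_def using h by (auto simp: hform_sum_right hform_scale_right)
qed

lemma zlat_iso_intro:
  fixes v :: "nat \<Rightarrow> complex ^ 'm" and k :: nat and G :: "nat \<Rightarrow> nat \<Rightarrow> int"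
  assumes G: "\<forall>i<k. \<forall>j<k. hform H (v i) (v j) = of_int (G i j)"
    and d: "\<forall>i<k. G i i \<noteq> 0" and od: "\<forall>i<k. \<forall>j<k. i \<noteq> j \<longrightarrow> G i j = 0"
  shows "zlat_iso H (mkN k v) k G"
  unfolding zlat_iso_def
proof (intro exI conjI)
  show "mkN k v = {\<Sum>i<k. of_int (a i) *s v i |a. True}" unfolding mkN_def ..
  show "\<forall>i<k. \<forall>j<k. hform H (v i) (v j) = of_int (G i j)" by (rule G)
  show "inj_on (\<lambda>a. \<Sum>i<k. of_int (a i) *s v i) {a. \<forall>i\<ge>k. a i = 0}"
  proof (rule inj_onI)
    fix a b assume a: "a \<in> {a. \<forall>i\<ge>k. a i = 0}" and b: "b \<in> {a. \<forall>i\<ge>k. a i = 0}"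
      and e: "(\<Sum>i<k. of_int (a i) *s v i) = (\<Sum>i<k. of_int (b i) *s v i)"
    have key: "hform H (v j) (\<Sum>i<k. of_int (c i) *s v i) = of_int (c j) * of_int (G j j)"
      if j: "j < k" for c :: "nat \<Rightarrow> int" and j
    proof -
      have "hform H (v j) (\<Sum>i<k. of_int (c i) *s v i) = (\<Sum>i<k. of_int (c i) * of_int (G j i))"
        using G j by (simp add: hform_sum_right hform_scale_right)
      also have "\<dots> = (\<Sum>i<k. if i = j then of_int (c j) * of_int (G j j) else 0)"
        using od j by (intro sum.cong) auto
      also have "\<dots> = of_int (c j) * of_int (G j j)" using j by (simp add: sum.delta')
      finally show ?thesis .
    qed
    show "a = b"
    proof
      fix j
      show "a j = b j"
      proof (cases "j < k")
        case True
        have "(of_int (a j) :: complex) * of_int (G j j) = of_int (b j) * of_int (G j j)"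
          using key[OF True, of a] key[OF True, of b] e by metis
        then show ?thesis using d True by simp
      next
        case False then show ?thesis using a b by simp
      qed
    qed
  qed
qed



lemma self_pclass: "x \<in> pclass x"
  unfolding pclass_def by (rule CollectI, rule exI[where x=1]) simp

lemma pclass_eq: "pclass x = pclass z \<Longrightarrow> \<exists>c. x = c *s z"
  using self_pclass[of x] unfolding pclass_def by auto

lemma final_eq:
  assumes herm: "hermitian_mat H"
    and eqv: "\<forall>x\<in>span (fixlat \<chi>'). (\<forall>y\<in>N. hform H x y = 0) \<longleftrightarrow> hform H x r = 0"
  shows "rball_B H \<chi>' \<inter> mirror_H H r =
     {p \<in> rball_B H \<chi>'. \<exists>x \<in> span (fixlat \<chi>'). p = pclass x \<and> (\<forall>y\<in>N. hform H x y = 0)}"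
proof (intro set_eqI iffI)
  fix p assume p: "p \<in> rball_B H \<chi>' \<inter> mirror_H H r"
  then obtain x where x: "p = pclass x" "x \<in> span (fixlat \<chi>')" unfolding rball_B_def by auto
  from p obtain z where z: "p = pclass z" "hform H r z = 0" unfolding mirror_H_def by auto
  obtain c where "x = c *s z" using pclass_eq[of x z] x z by auto
  then have "hform H r x = 0" using z by (simp add: hform_scale_right)
  then have "hform H x r = 0" using hform_herm[OF herm, of x r] by simp
  then show "p \<in> {p \<in> rball_B H \<chi>'. \<exists>x \<in> span (fixlat \<chi>'). p = pclass x \<and> (\<forall>y\<in>N. hform H x y = 0)}"
    using p x eqv by auto
next
  fix p assume p: "p \<in> {p \<in> rball_B H \<chi>'. \<exists>x \<in> span (fixlat \<chi>'). p = pclass x \<and> (\<forall>y\<in>N. hform H x y = 0)}"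
  then obtain x where x: "p = pclass x" "x \<in> span (fixlat \<chi>')" "\<forall>y\<in>N. hform H x y = 0" by auto
  from p obtain x' where x': "p = pclass x'" "Re (hform H x' x') > 0" unfolding rball_B_def by auto
  obtain c where c: "x = c *s x'" using pclass_eq[of x x'] x x' by auto
  have "c \<noteq> 0"
  proof
    assume "c = 0"
    then have "x = 0" using c by simp
    then have "pclass x = {0}" unfolding pclass_def by auto
    moreover have "x' \<in> pclass x" using x x' self_pclass by auto
    ultimately have "x' = 0" by auto
    then show False using x' by (simp add: hform_zero_left)
  qed
  have "hform H x x = cnj c * c * hform H x' x'" using c by (simp add: hform_scale_left hform_scale_right)
  also have "\<dots> = of_real (cmod c ^ 2) * hform H x' x'" by (simp add: cnj_mult_self)
  finally have "Re (hform H x x) = cmod c ^ 2 * Re (hform H x' x')" by simp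
  then have pos: "Re (hform H x x) > 0" using x' \<open>c \<noteq> 0\<close> by simp
  have "hform H x r = 0" using x eqv by auto
  then have "hform H r x = 0" using hform_herm[OF herm, of r x] by simp
  then have "p \<in> mirror_H H r" unfolding mirror_H_def using x pos by auto
  then show "p \<in> rball_B H \<chi>' \<inter> mirror_H H r" using p by auto
qed

context
  fixes H and \<chi>' :: "complex ^ 'm \<Rightarrow> complex ^ 'm"
  assumes au: "antiunitary_inv H \<chi>'"
begin

lemma chi_0: "\<chi>' 0 = 0"
  using chi_add[OF au, of 0 0] by simp

lemma fix_0: "0 \<in> fixlat \<chi>'" unfolding fixlat_def using chi_0 by simp
lemma fix_add: "x \<in> fixlat \<chi>' \<Longrightarrow> y \<in> fixlat \<chi>' \<Longrightarrow> x + y \<in> fixlat \<chi>'"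
  unfolding fixlat_def using chi_add[OF au] glat_add by auto
lemma fix_int: "x \<in> fixlat \<chi>' \<Longrightarrow> of_int n *s x \<in> fixlat \<chi>'"
  unfolding fixlat_def using chi_scale[OF au, of "of_int n" x] glat_scale[of "of_int n" x] by auto
lemma fix_sum: "finite A \<Longrightarrow> (\<forall>i\<in>A. f i \<in> fixlat \<chi>') \<Longrightarrow> (\<Sum>i\<in>A. f i) \<in> fixlat \<chi>'"
  by (induct A rule: finite_induct) (auto intro: fix_0 fix_add)

lemma mkN_sub: "\<forall>i<k. v i \<in> fixlat \<chi>' \<Longrightarrow> mkN k v \<subseteq> fixlat \<chi>'"
  unfolding mkN_def by (auto intro!: fix_sum fix_int)

end



lemma zlat1:
  assumes "hform H v0 v0 = of_int (G 0 0)" "G 0 0 \<noteq> 0"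
  shows "zlat_iso H (mkN 1 (\<lambda>_. v0)) 1 G"
  by (rule zlat_iso_intro) (use assms in auto)

lemma zlat2:
  assumes "hform H v0 v0 = of_int (G 0 0)" "hform H v1 v1 = of_int (G 1 1)"
    "hform H v0 v1 = of_int (G 0 1)" "hform H v1 v0 = of_int (G 1 0)"
    "G 0 0 \<noteq> 0" "G 1 1 \<noteq> 0" "G 0 1 = 0" "G 1 0 = 0"
  shows "zlat_iso H (mkN 2 (\<lambda>i. if i = 0 then v0 else v1)) 2 G"
proof (rule zlat_iso_intro)
  have two: "\<And>i::nat. i < 2 \<longleftrightarrow> i = 0 \<or> i = 1" by auto
  show "\<forall>i<2. \<forall>j<2. hform H (if i = 0 then v0 else v1) (if j = 0 then v0 else v1) = of_int (G i j)"
    unfolding two using assms by auto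
  show "\<forall>i<2. G i i \<noteq> 0" unfolding two using assms by auto
  show "\<forall>i<2. \<forall>j<2. i \<noteq> j \<longrightarrow> G i j = 0" unfolding two using assms by auto
qed

lemma two_all: "(\<forall>i<(2::nat). P (if i = 0 then v0 else v1)) \<longleftrightarrow> P v0 \<and> P v1"
proof -
  have two: "\<And>i::nat. i < 2 \<longleftrightarrow> i = 0 \<or> i = 1" by auto
  show ?thesis unfolding two by auto
qed

lemma one_all: "(\<forall>i<(1::nat). P v0) \<longleftrightarrow> P v0" by auto

lemma finish:
  assumes herm: "hermitian_mat H" and au: "antiunitary_inv H \<chi>'"
    and fx: "\<forall>i<k. v i \<in> fixlat \<chi>'" and z: "zlat_iso H (mkN k v) k G"
    and o: "\<forall>x\<in>span (fixlat \<chi>'). (\<forall>i<k. hform H x (v i) = 0) \<longleftrightarrow> hform H x r = 0"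
  shows "\<exists>N. N \<subseteq> fixlat \<chi>' \<and> zlat_iso H N k G \<and>
           rball_B H \<chi>' \<inter> mirror_H H r =
             {p \<in> rball_B H \<chi>'. \<exists>x \<in> span (fixlat \<chi>'). p = pclass x \<and>
                 (\<forall>y\<in>N. hform H x y = 0)}"
proof (intro exI conjI)
  show "mkN k v \<subseteq> fixlat \<chi>'" by (rule mkN_sub[OF au fx])
  show "zlat_iso H (mkN k v) k G" by (rule z)
  show "rball_B H \<chi>' \<inter> mirror_H H r =
     {p \<in> rball_B H \<chi>'. \<exists>x \<in> span (fixlat \<chi>'). p = pclass x \<and> (\<forall>y\<in>mkN k v. hform H x y = 0)}"
    by (rule final_eq[OF herm]) (simp add: orthN o)
qed

lemma btype:
  fixes t :: int
  assumes "hform H u0 u0 = -2" "hform H u1 u1 = -6" "hform H u0 u1 = 2 * of_int t"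
    "hform H u1 u0 = 2 * of_int t" "t * t = 1"
  shows "hform H (u1 + of_int t *s u0) (u1 + of_int t *s u0) = -4"
    "hform H u0 (u1 + of_int t *s u0) = 0" "hform H (u1 + of_int t *s u0) u0 = 0"
proof -
  have tt: "(of_int t :: complex) * of_int t = 1" using assms(5)
    by (metis of_int_1 of_int_mult)
  show "hform H (u1 + of_int t *s u0) (u1 + of_int t *s u0) = -4"
    using assms tt by (simp add: hform_add_left hform_add_right hform_scale_left hform_scale_right
        algebra_simps)
  show "hform H u0 (u1 + of_int t *s u0) = 0" "hform H (u1 + of_int t *s u0) u0 = 0"
    using assms by (simp_all add: hform_add_left hform_add_right hform_scale_left hform_scale_right)
qed



lemma aux_p: assumes "z = \<i> * cnj z" shows "(z + cnj z = 0 \<longleftrightarrow> z = 0)"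
proof -
  have e: "Re z = Im z" using arg_cong[OF assms, of Re] by simp
  show ?thesis by (simp add: complex_eq_iff e)
qed
lemma aux_m: assumes "z = (- \<i>) * cnj z" shows "(z + cnj z = 0 \<longleftrightarrow> z = 0)"
proof -
  have e: "Re z = - Im z" using arg_cong[OF assms, of Re] by simp
  show ?thesis by (simp add: complex_eq_iff e)
qed

lemmas hf = hform_add_left hform_add_right hform_diff_left hform_diff_right
  hform_scale_left hform_scale_right

theorem lemma4p11:
  fixes n :: nat and H :: "complex ^ 'm ^ 'm"
    and \<chi>' :: "complex ^ 'm \<Rightarrow> complex ^ 'm" and r :: "complex ^ 'm"
  assumes "n \<ge> 2"
    and "hyperbolic_sig n H"
    and "\<forall>x\<in>glat. \<forall>y\<in>glat. \<exists>g\<in>gauss. hform H x y = (1 + \<i>) * g"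
    and "antiunitary_inv H \<chi>'"
    and "r \<in> glat" and "hform H r r = -2"
    and "rball_B H \<chi>' \<inter> mirror_H H r \<noteq> {}"
  shows "\<exists>N. N \<subseteq> fixlat \<chi>' \<and>
           (zlat_iso H N 1 gram_A1 \<or> zlat_iso H N 1 gram_A1_2 \<or>
            zlat_iso H N 2 gram_A1_A1_2 \<or> zlat_iso H N 2 gram_A1_2_sq) \<and>
           rball_B H \<chi>' \<inter> mirror_H H r =
             {p \<in> rball_B H \<chi>'. \<exists>x \<in> span (fixlat \<chi>'). p = pclass x \<and>
                 (\<forall>y\<in>N. hform H x y = 0)}"
proof -
  have herm: "hermitian_mat H" using assms(2) unfolding hyperbolic_sig_def by blast
  note au = assms(4)
  note rg = assms(5)
  note hrr = assms(6)
  obtain p where p: "p \<in> rball_B H \<chi>' \<inter> mirror_H H r" using assms(7) by blast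
  obtain x0 where x0: "p = pclass x0" "x0 \<in> span (fixlat \<chi>')" "Re (hform H x0 x0) > 0"
    using p unfolding rball_B_def by auto
  obtain z where z: "p = pclass z" "hform H r z = 0" using p unfolding mirror_H_def by auto
  obtain c0 where "x0 = c0 *s z" using pclass_eq[of x0 z] x0 z by auto
  then have "hform H r x0 = 0" using z by (simp add: hform_scale_right)
  then have hx0r: "hform H x0 r = 0" using hform_herm[OF herm, of x0 r] by simp
  define s where "s = \<chi>' r"
  have sg: "s \<in> glat" unfolding s_def by (rule chi_glat[OF au rg])
  have chis: "\<chi>' s = r" unfolding s_def by (rule chi_inv[OF au rg])
  have hss: "hform H s s = -2" unfolding s_def using chi_h[OF au rg rg] hrr by simp
  have spn: "hform H x s = cnj (hform H x r)" if "x \<in> span (fixlat \<chi>')" for x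
    unfolding s_def by (rule span_chi[OF au that rg])
  have hx0s: "hform H x0 s = 0" using spn[OF x0(2)] hx0r by simp
  define a where "a = hform H r s"
  have hsr: "hform H s r = cnj a" unfolding a_def using hform_herm[OF herm, of s r] by simp
  obtain g where g: "g \<in> gauss" "a = (1 + \<i>) * g" using assms(3) rg sg unfolding a_def by blast
  obtain p' q' :: int where pq: "Re g = of_int p'" "Im g = of_int q'"
    using g(1) unfolding gauss_def by (auto elim!: Ints_cases)
  have a_eq: "a = of_int (p' - q') + \<i> * of_int (p' + q')"
    using g(2) pq by (simp add: complex_eq_iff)
  have hww: "hform H (r - c *s s) (r - c *s s) = -2 - c * a - cnj c * cnj a - 2 * (cnj c * c)" for c
    by (simp add: hf hrr hss hsr a_def[symmetric] algebra_simps)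
  have wsig: "Re (hform H (r - c *s s) (r - c *s s)) \<le> 0 \<and>
      (hform H (r - c *s s) (r - c *s s) = 0 \<longrightarrow> r - c *s s = 0)" for c
    by (rule sig_neg[OF assms(2) x0(3)]) (simp add: hf hx0r hx0s)
  have "Re (hform H (r - (- cnj a / 2) *s s) (r - (- cnj a / 2) *s s)) = -2 + of_int (p'^2 + q'^2)"
    unfolding hww a_eq by (simp add: power2_eq_square algebra_simps)
  then have "real_of_int (p'^2 + q'^2) \<le> real_of_int 2" using wsig[of "- cnj a / 2"] by simp
  then have pq2: "p'^2 + q'^2 \<le> 2" by (simp only: of_int_le_iff)
  have pb: "\<bar>p'\<bar> \<le> 1"
  proof (rule ccontr)
    assume "\<not> \<bar>p'\<bar> \<le> 1"
    then have "\<bar>2\<bar> \<le> \<bar>p'\<bar>" by simp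
    then have "2^2 \<le> p'^2" by (simp only: abs_le_square_iff)
    then have "4 \<le> p'^2" by simp
    then show False using pq2 zero_le_power2[of p'] zero_le_power2[of q'] by linarith
  qed
  have qb: "\<bar>q'\<bar> \<le> 1"
  proof (rule ccontr)
    assume "\<not> \<bar>q'\<bar> \<le> 1"
    then have "\<bar>2\<bar> \<le> \<bar>q'\<bar>" by simp
    then have "2^2 \<le> q'^2" by (simp only: abs_le_square_iff)
    then have "4 \<le> q'^2" by simp
    then show False using pq2 zero_le_power2[of p'] zero_le_power2[of q'] by linarith
  qed
  define e1 where "e1 = r + s"
  define e2 where "e2 = \<i> *s (r - s)"
  have e1f: "e1 \<in> fixlat \<chi>'" unfolding fixlat_def e1_def
    using glat_add[OF rg sg] chi_add[OF au rg sg] chis by (simp add: s_def[symmetric] add.commute)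
  have e2f: "e2 \<in> fixlat \<chi>'" unfolding fixlat_def e2_def
    using glat_scale[OF gauss_ii glat_diff[OF rg sg]] chi_ii[OF au glat_diff[OF rg sg]]
      chi_diff[OF au rg sg] chis by (simp add: s_def[symmetric] algebra_simps)
  have o12: "(hform H x e1 = 0 \<and> hform H x e2 = 0) \<longleftrightarrow> hform H x r = 0"
    if "x \<in> span (fixlat \<chi>')" for x
    using spn[OF that] unfolding e1_def e2_def by (auto simp: hf complex_eq_iff)
  have g11: "hform H e1 e1 = -4 + a + cnj a"
    unfolding e1_def by (simp add: hf hrr hss hsr a_def[symmetric])
  have g12: "hform H e1 e2 = \<i> * (cnj a - a)"
    unfolding e1_def e2_def by (simp add: hf hrr hss hsr a_def[symmetric] algebra_simps)
  have g21: "hform H e2 e1 = \<i> * (cnj a - a)"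
    unfolding e1_def e2_def by (simp add: hf hrr hss hsr a_def[symmetric] algebra_simps)
  have g22: "hform H e2 e2 = -4 - a - cnj a"
    unfolding e1_def e2_def by (simp add: hf hrr hss hsr a_def[symmetric] algebra_simps)
  have pcases: "p' \<in> {-1, 0, 1}" "q' \<in> {-1, 0, 1}" using pb qb by auto
  have rw: "r = c *s s" if "hform H (r - c *s s) (r - c *s s) = 0" for c
    using wsig[of c] that by simp
  have hxr: "hform H x r = c * cnj (hform H x r)" if "r = c *s s" "x \<in> span (fixlat \<chi>')" for c x
  proof -
    have "hform H x r = c * hform H x s" using that(1) by (simp add: hform_scale_right)
    then show ?thesis using spn[OF that(2)] by simp
  qed
  have cs: "(p' = 0 \<and> q' = 0) \<or> (p' - q' = 1 \<and> (p'+q')*(p'+q') = 1) \<or>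
      (p' - q' = -1 \<and> (p'+q')*(p'+q') = 1) \<or> (p' = 1 \<and> q' = -1) \<or> (p' = -1 \<and> q' = 1) \<or>
      (p' = 1 \<and> q' = 1) \<or> (p' = -1 \<and> q' = -1)" using pcases by auto
  let ?goal = "\<lambda>k G. \<exists>N. N \<subseteq> fixlat \<chi>' \<and> zlat_iso H N k G \<and>
           rball_B H \<chi>' \<inter> mirror_H H r =
             {p \<in> rball_B H \<chi>'. \<exists>x \<in> span (fixlat \<chi>'). p = pclass x \<and>
                 (\<forall>y\<in>N. hform H x y = 0)}"
  have two: "\<And>i::nat. i < 2 \<longleftrightarrow> i = 0 \<or> i = 1" by auto
  have fin2: "?goal 2 G" if "v0 \<in> fixlat \<chi>'" "v1 \<in> fixlat \<chi>'"
    "zlat_iso H (mkN 2 (\<lambda>i. if i = 0 then v0 else v1)) 2 G"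
    "\<forall>x\<in>span (fixlat \<chi>'). (hform H x v0 = 0 \<and> hform H x v1 = 0) \<longleftrightarrow> hform H x r = 0"
    for v0 v1 G
    by (rule finish[OF herm au]) (use that in \<open>auto simp: two\<close>)
  have fin1: "?goal 1 G" if "v0 \<in> fixlat \<chi>'"
    "zlat_iso H (mkN 1 (\<lambda>_. v0)) 1 G"
    "\<forall>x\<in>span (fixlat \<chi>'). hform H x v0 = 0 \<longleftrightarrow> hform H x r = 0"
    for v0 G
    by (rule finish[OF herm au]) (use that in auto)
  from cs show ?thesis
  proof (elim disjE conjE)
    assume "p' = 0" "q' = 0"
    then have a0: "a = 0" using a_eq by simp
    have "?goal 2 gram_A1_2_sq"
      by (rule fin2[OF e1f e2f zlat2]) (use o12 in \<open>auto simp: g11 g12 g21 g22 a0 gram_A1_2_sq_def\<close>)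
    then show ?thesis by blast
  next
    assume h1: "p' - q' = 1" and h2: "(p'+q')*(p'+q') = 1"
    define t where "t = p' + q'"
    have at: "a = 1 + \<i> * of_int t" using a_eq h1 unfolding t_def by simp
    have G: "hform H e1 e1 = -2" "hform H e2 e2 = -6" "hform H e1 e2 = 2 * of_int t"
      "hform H e2 e1 = 2 * of_int t"
      by (simp_all add: g11 g22 g12 g21 at algebra_simps)
    note bt = btype[OF G, unfolded t_def[symmetric], OF h2[folded t_def]]
    have "?goal 2 gram_A1_A1_2"
    proof (rule fin2[OF e1f fix_add[OF au e2f fix_int[OF au e1f]] zlat2])
      show "\<forall>x\<in>span (fixlat \<chi>'). (hform H x e1 = 0 \<and> hform H x (e2 + of_int t *s e1) = 0) \<longleftrightarrow> hform H x r = 0"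
      proof
        fix x assume x: "x \<in> span (fixlat \<chi>')"
        have "(hform H x e1 = 0 \<and> hform H x (e2 + of_int t *s e1) = 0) \<longleftrightarrow> (hform H x e1 = 0 \<and> hform H x e2 = 0)"
          by (auto simp: hf)
        then show "(hform H x e1 = 0 \<and> hform H x (e2 + of_int t *s e1) = 0) \<longleftrightarrow> hform H x r = 0"
          using o12[OF x] by auto
      qed
    qed (use G bt in \<open>simp_all add: gram_A1_A1_2_def\<close>)
    then show ?thesis by blast
  next
    assume h1: "p' - q' = -1" and h2: "(p'+q')*(p'+q') = 1"
    define t where "t = p' + q'"
    have at: "a = -1 + \<i> * of_int t" using a_eq h1 unfolding t_def by simp
    have G: "hform H e2 e2 = -2" "hform H e1 e1 = -6" "hform H e2 e1 = 2 * of_int t"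
      "hform H e1 e2 = 2 * of_int t"
      by (simp_all add: g11 g22 g12 g21 at algebra_simps)
    note bt = btype[OF G, unfolded t_def[symmetric], OF h2[folded t_def]]
    have "?goal 2 gram_A1_A1_2"
    proof (rule fin2[OF e2f fix_add[OF au e1f fix_int[OF au e2f]] zlat2])
      show "\<forall>x\<in>span (fixlat \<chi>'). (hform H x e2 = 0 \<and> hform H x (e1 + of_int t *s e2) = 0) \<longleftrightarrow> hform H x r = 0"
      proof
        fix x assume x: "x \<in> span (fixlat \<chi>')"
        have "(hform H x e2 = 0 \<and> hform H x (e1 + of_int t *s e2) = 0) \<longleftrightarrow> (hform H x e2 = 0 \<and> hform H x e1 = 0)"
          by (auto simp: hf)
        then show "(hform H x e2 = 0 \<and> hform H x (e1 + of_int t *s e2) = 0) \<longleftrightarrow> hform H x r = 0"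
          using o12[OF x] by auto
      qed
    qed (use G bt in \<open>simp_all add: gram_A1_A1_2_def\<close>)
    then show ?thesis by blast
  next
    assume "p' = 1" "q' = -1"
    then have a2: "a = 2" using a_eq by simp
    have "r = (-1) *s s" by (rule rw, unfold hww a2) simp
    then have sr: "s = - r" by simp
    have f: "\<i> *s r \<in> fixlat \<chi>'" unfolding fixlat_def
      using glat_scale[OF gauss_ii rg] chi_ii[OF au rg] sr by (simp add: s_def[symmetric])
    have "?goal 1 gram_A1"
      by (rule fin1[OF f zlat1]) (auto simp: hf hrr gram_A1_def)
    then show ?thesis by blast
  next
    assume "p' = -1" "q' = 1"
    then have a2: "a = -2" using a_eq by simp
    have "r = 1 *s s" by (rule rw, unfold hww a2) simp
    then have sr: "s = r" by simp
    have f: "r \<in> fixlat \<chi>'" unfolding fixlat_def using rg sr by (simp add: s_def[symmetric])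
    have "?goal 1 gram_A1"
      by (rule fin1[OF f zlat1]) (auto simp: hrr gram_A1_def)
    then show ?thesis by blast
  next
    assume "p' = 1" "q' = 1"
    then have a2: "a = 2 * \<i>" using a_eq by simp
    have rs: "r = \<i> *s s" by (rule rw, unfold hww a2) simp
    have "?goal 1 gram_A1_2"
    proof (rule fin1[OF e1f zlat1])
      show "\<forall>x\<in>span (fixlat \<chi>'). hform H x e1 = 0 \<longleftrightarrow> hform H x r = 0"
      proof
        fix x assume x: "x \<in> span (fixlat \<chi>')"
        show "hform H x e1 = 0 \<longleftrightarrow> hform H x r = 0"
        proof -
          have "hform H x e1 = hform H x r + cnj (hform H x r)"
            unfolding e1_def using spn[OF x] by (simp add: hform_add_right)
          then show ?thesis using aux_p[OF hxr[OF rs x]] by simp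
        qed
      qed
    qed (simp_all add: g11 a2 gram_A1_2_def)
    then show ?thesis by blast
  next
    assume "p' = -1" "q' = -1"
    then have a2: "a = - 2 * \<i>" using a_eq by simp
    have rs: "r = (- \<i>) *s s" by (rule rw, unfold hww a2) simp
    have "?goal 1 gram_A1_2"
    proof (rule fin1[OF e1f zlat1])
      show "\<forall>x\<in>span (fixlat \<chi>'). hform H x e1 = 0 \<longleftrightarrow> hform H x r = 0"
      proof
        fix x assume x: "x \<in> span (fixlat \<chi>')"
        show "hform H x e1 = 0 \<longleftrightarrow> hform H x r = 0"
        proof -
          have "hform H x e1 = hform H x r + cnj (hform H x r)"
            unfolding e1_def using spn[OF x] by (simp add: hform_add_right)
          then show ?thesis using aux_m[OF hxr[OF rs x]] by simp
        qed
      qed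
    qed (simp_all add: g11 a2 gram_A1_2_def)
    then show ?thesis by blast
  qed
qed

end
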